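(* Let $\Lambda=\Lambda(V^* )$, $V=\mathbb{C}^n$, and $W=\mathrm{der}(\Lambda)$ carry the gradings of type $\vec k=(k_1,\dots,k_m)$, with depths $d(\Lambda)$ and $d(W)$. (i) The grading of $\Lambda$ has depth $d(\Lambda)=1$ if and only if $\vec k=(-1,k_2,\dots,k_m)$ and $\dim U^{-1}=1$; in this case $d(W)=k_m+1$. (ii) The grading of $\Lambda$ has depth $d(\Lambda)=0$ if and only if $k_1\ge 0$. Moreover, when $d(\Lambda)=0$: $d(W)=0$ if and only if $\vec k=(0)$, and $d(W)=1$ if and only if $\vec k=(0,1)$ or $\vec k=(1)$.
   Context: Grading of type $\vec k$: a decomposition $U=V^*=U^{k_1}\oplus\cdots\oplus U^{k_m}$ with integers $k_1<\cdots<k_m$ and $n_i=\dim U^{k_i}>0$ induces $V^{-k_i}=(U^{k_i})^*$, the grading $\Lambda^p=\bigoplus_{p_1k_1+\cdots+p_mk_m=p}\Lambda^{p_1}(U^{k_1})\cdots\Lambda^{p_m}(U^{k_m})$ of $\Lambda$ (where $\Lambda^{p_i}(U^{k_i})$ denotes exterior forms of polynomial degree $p_i$ on $U^{k_i}$), and the grading $W^q=\bigoplus_{p-k_i=q}\Lambda^p\partial_{V^{-k_i}}$ of $W=\Lambda\otimes\partial_V$. A graded space $A=\bigoplus A^p$ has depth $d$ if $A^{-d}\neq0$ and $A^{p}=0$ for all $p<-d$. *)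

theory Defs
  imports Main
begin

text \<open>A grading of type ks = [k_1,...,k_m] of U = V^* is encoded by the list ks of
  degrees (strictly increasing) and the list ns of dimensions n_i = dim U^{k_i} > 0.
  The graded spaces are encoded by their dimension functions (degree \<Rightarrow> dimension).\<close>

definition valid_grading :: "int list \<Rightarrow> nat list \<Rightarrow> bool" where
  "valid_grading ks ns \<longleftrightarrow> ks \<noteq> [] \<and> length ns = length ks \<and>
     sorted_wrt (<) ks \<and> (\<forall>i<length ns. ns ! i > 0)"

definition exps :: "nat list \<Rightarrow> nat list set" where
  "exps ns = {ps. length ps = length ns \<and> (\<forall>i<length ns. ps ! i \<le> ns ! i)}"

definition wdeg :: "int list \<Rightarrow> nat list \<Rightarrow> int" where
  "wdeg ks ps = (\<Sum>i<length ks. int (ps ! i) * ks ! i)"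

text \<open>dim \<Lambda>^p = sum over p_1 k_1 + ... + p_m k_m = p of prod_i dim \<Lambda>^{p_i}(U^{k_i}).\<close>
definition dimLam :: "int list \<Rightarrow> nat list \<Rightarrow> int \<Rightarrow> nat" where
  "dimLam ks ns p = (\<Sum>ps\<in>{ps \<in> exps ns. wdeg ks ps = p}. \<Prod>i<length ns. (ns ! i) choose (ps ! i))"

text \<open>dim W^q = sum_i dim \<Lambda>^{q+k_i} * dim V^{-k_i}, with dim V^{-k_i} = n_i.\<close>
definition dimW :: "int list \<Rightarrow> nat list \<Rightarrow> int \<Rightarrow> nat" where
  "dimW ks ns q = (\<Sum>i<length ks. dimLam ks ns (q + ks ! i) * ns ! i)"

definition has_depth :: "(int \<Rightarrow> nat) \<Rightarrow> int \<Rightarrow> bool" where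
  "has_depth A d \<longleftrightarrow> A (- d) \<noteq> 0 \<and> (\<forall>p < - d. A p = 0)"

end

theory Submission
  imports Defs
begin

lemma finite_exps: "finite (exps ns)"
proof -
  have "exps ns \<subseteq> {xs. set xs \<subseteq> {..sum_list ns} \<and> length xs = length ns}"
  proof
    fix ps assume "ps \<in> exps ns"
    then have l: "length ps = length ns" and b: "\<forall>i<length ns. ps ! i \<le> ns ! i"
      by (auto simp: exps_def)
    have "set ps \<subseteq> {..sum_list ns}"
    proof
      fix x assume "x \<in> set ps"
      then obtain i where i: "i < length ps" "ps ! i = x" by (auto simp: in_set_conv_nth)
      have "ns ! i \<le> sum_list ns" using i l by (simp add: elem_le_sum_list)
      then show "x \<in> {..sum_list ns}" using b i l by force
    qed
    then show "ps \<in> {xs. set xs \<subseteq> {..sum_list ns} \<and> length xs = length ns}" using l by simp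
  qed
  then show ?thesis by (rule finite_subset) (simp add: finite_lists_length_eq)
qed

lemma dimLam_nz: "dimLam ks ns p \<noteq> 0 \<longleftrightarrow> (\<exists>ps\<in>exps ns. wdeg ks ps = p)"
proof -
  have fin: "finite {ps \<in> exps ns. wdeg ks ps = p}" using finite_exps by simp
  have pos: "(\<Prod>i<length ns. (ns ! i) choose (ps ! i)) \<noteq> 0" if "ps \<in> exps ns" for ps
    using that by (auto simp: exps_def)
  show ?thesis unfolding dimLam_def using fin pos by (auto simp: sum_eq_0_iff)
qed

definition pmin :: "int list \<Rightarrow> nat list \<Rightarrow> nat list" where
  "pmin ks ns = map (\<lambda>i. if ks ! i < 0 then ns ! i else 0) [0..<length ns]"

definition Mn :: "int list \<Rightarrow> nat list \<Rightarrow> int" where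
  "Mn ks ns = (\<Sum>i<length ks. if ks ! i < 0 then int (ns ! i) * ks ! i else 0)"

lemma pmin_exps: "pmin ks ns \<in> exps ns"
  by (auto simp: pmin_def exps_def)

lemma wdeg_pmin: "length ns = length ks \<Longrightarrow> wdeg ks (pmin ks ns) = Mn ks ns"
  unfolding wdeg_def Mn_def pmin_def by (intro sum.cong) auto

lemma wdeg_ge: assumes "length ns = length ks" "ps \<in> exps ns"
  shows "Mn ks ns \<le> wdeg ks ps"
  unfolding wdeg_def Mn_def
proof (rule sum_mono)
  fix i assume "i \<in> {..<length ks}"
  then have "ps ! i \<le> ns ! i" using assms by (auto simp: exps_def)
  then have "int (ps ! i) \<le> int (ns ! i)" by simp
  then show "(if ks ! i < 0 then int (ns ! i) * ks ! i else 0) \<le> int (ps ! i) * ks ! i"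
    by (auto intro: mult_right_mono_neg)
qed

lemma depth_char:
  assumes "A m \<noteq> 0" "\<And>p. p < m \<Longrightarrow> A p = 0"
  shows "has_depth A d \<longleftrightarrow> d = - m"
proof
  assume h: "has_depth A d"
  then have "A (-d) \<noteq> 0" "\<forall>p < - d. A p = 0" by (auto simp: has_depth_def)
  then show "d = - m" using assms by (metis linorder_neqE_linordered_idom minus_minus)
next
  assume "d = - m" then show "has_depth A d" using assms by (simp add: has_depth_def)
qed

lemma lam_depth: assumes "length ns = length ks"
  shows "has_depth (dimLam ks ns) d \<longleftrightarrow> d = - Mn ks ns"
proof (rule depth_char)
  show "dimLam ks ns (Mn ks ns) \<noteq> 0" using dimLam_nz pmin_exps wdeg_pmin[OF assms] by metis
  fix p assume "p < Mn ks ns"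
  then show "dimLam ks ns p = 0" using dimLam_nz wdeg_ge[OF assms] by force
qed

lemma le_last: assumes "sorted_wrt (<) (xs::int list)" "i < length xs" shows "xs ! i \<le> last xs"
proof -
  have ne: "xs \<noteq> []" using assms by auto
  then have l: "last xs = xs ! (length xs - 1)" by (simp add: last_conv_nth)
  show ?thesis
  proof (cases "i = length xs - 1")
    case True then show ?thesis using l by simp
  next
    case False
    then have "i < length xs - 1" using assms(2) by simp
    then have "xs ! i < xs ! (length xs - 1)" using assms(1) ne sorted_wrt_nth_less[of "(<)" xs i "length xs - 1"] by simp
    then show ?thesis using l by simp
  qed
qed

lemma W_depth: assumes "valid_grading ks ns"
  shows "has_depth (dimW ks ns) d \<longleftrightarrow> d = last ks - Mn ks ns"
proof -
  have l: "length ns = length ks" and ne: "ks \<noteq> []" and s: "sorted_wrt (<) ks"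
    and np: "\<forall>i<length ns. ns ! i > 0" using assms by (auto simp: valid_grading_def)
  have "has_depth (dimW ks ns) d \<longleftrightarrow> d = - (Mn ks ns - last ks)"
  proof (rule depth_char)
    let ?j = "length ks - 1"
    have j: "?j < length ks" using ne by simp
    have lj: "ks ! ?j = last ks" using ne by (simp add: last_conv_nth)
    have "dimLam ks ns (Mn ks ns - last ks + ks ! ?j) * ns ! ?j \<noteq> 0"
      using lj j np l dimLam_nz pmin_exps wdeg_pmin[OF l] by (metis diff_add_cancel mult_is_0 not_less0 gr_zeroI)
    then show "dimW ks ns (Mn ks ns - last ks) \<noteq> 0" unfolding dimW_def
      using j by (simp add: sum_eq_0_iff) (metis j lessThan_iff)
    fix p assume p: "p < Mn ks ns - last ks"
    have "dimLam ks ns (p + ks ! i) = 0" if "i < length ks" for i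
    proof -
      have "ks ! i \<le> last ks" using le_last[OF s that] .
      then have "p + ks ! i < Mn ks ns" using p by simp
      then show ?thesis using dimLam_nz wdeg_ge[OF l] by force
    qed
    then show "dimW ks ns p = 0" unfolding dimW_def by simp
  qed
  then show ?thesis by simp
qed

lemma Mn_nonneg_case: assumes "valid_grading ks ns" "ks ! 0 \<ge> 0" shows "Mn ks ns = 0"
proof -
  have s: "sorted_wrt (<) ks" using assms by (simp add: valid_grading_def)
  have "ks ! i \<ge> 0" if "i < length ks" for i
  proof (cases i)
    case 0 then show ?thesis using assms by simp
  next
    case (Suc k) then have "ks ! 0 < ks ! i" using s that by (simp add: sorted_wrt_iff_nth_less)
    then show ?thesis using assms by simp
  qed
  then show ?thesis unfolding Mn_def by (intro sum.neutral ballI) (metis lessThan_iff not_less)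
qed

lemma Mn_split: assumes "valid_grading ks ns"
  shows "Mn ks ns = (if ks ! 0 < 0 then int (ns ! 0) * ks ! 0 else 0)
     + (\<Sum>i\<in>{1..<length ks}. if ks ! i < 0 then int (ns ! i) * ks ! i else 0)"
proof -
  have ne: "ks \<noteq> []" using assms by (simp add: valid_grading_def)
  have "{..<length ks} = insert 0 {1..<length ks}" using ne by auto
  then show ?thesis unfolding Mn_def by simp
qed

lemma rest_le: "(\<Sum>i\<in>{1..<length ks}. if ks ! i < 0 then int (ns ! i) * ks ! i else 0) \<le> 0"
  by (rule sum_nonpos) (auto simp: mult_nonneg_nonpos)

lemma Mn_neg: assumes "valid_grading ks ns" "ks ! 0 < 0" shows "Mn ks ns \<le> int (ns ! 0) * ks ! 0"
  "int (ns ! 0) * ks ! 0 \<le> -1"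
proof -
  show "Mn ks ns \<le> int (ns ! 0) * ks ! 0" using Mn_split[OF assms(1)] rest_le[of ks ns] assms(2) by simp
  have "ns ! 0 > 0" using assms(1) by (auto simp: valid_grading_def)
  then have "int (ns ! 0) \<ge> 1" by simp
  then have "int (ns ! 0) * ks ! 0 \<le> 1 * ks ! 0" using assms(2) by (intro mult_right_mono_neg) auto
  then show "int (ns ! 0) * ks ! 0 \<le> -1" using assms(2) by linarith
qed

lemma Mn_m1: assumes "valid_grading ks ns" shows "Mn ks ns = -1 \<longleftrightarrow> ks ! 0 = -1 \<and> ns ! 0 = 1"
proof
  assume h: "Mn ks ns = -1"
  have k: "ks ! 0 < 0" using h Mn_nonneg_case[OF assms] by force
  have e: "int (ns ! 0) * ks ! 0 = -1" using Mn_neg[OF assms k] h by simp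
  have "ns ! 0 > 0" using assms by (auto simp: valid_grading_def)
  then have n1: "int (ns ! 0) \<ge> 1" by simp
  have "int (ns ! 0) * ks ! 0 \<le> int (ns ! 0) * (-1)" using k n1 by (intro mult_left_mono) auto
  then have "int (ns ! 0) = 1" using e n1 by linarith
  then show "ks ! 0 = -1 \<and> ns ! 0 = 1" using e by simp
next
  assume h: "ks ! 0 = -1 \<and> ns ! 0 = 1"
  have s: "sorted_wrt (<) ks" using assms by (simp add: valid_grading_def)
  have "(\<Sum>i\<in>{1..<length ks}. if ks ! i < 0 then int (ns ! i) * ks ! i else 0) = 0"
  proof (rule sum.neutral, intro ballI)
    fix i assume "i \<in> {1..<length ks}"
    then have "ks ! 0 < ks ! i" using s by (auto simp: sorted_wrt_iff_nth_less)
    then show "(if ks ! i < 0 then int (ns ! i) * ks ! i else 0) = 0" using h by simp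
  qed
  then show "Mn ks ns = -1" using Mn_split[OF assms] h by simp
qed

lemma Mn_0: assumes "valid_grading ks ns" shows "Mn ks ns = 0 \<longleftrightarrow> ks ! 0 \<ge> 0"
  using Mn_nonneg_case[OF assms] Mn_neg[OF assms] by force

lemma last0: assumes "valid_grading ks ns" "ks ! 0 \<ge> 0"
  shows "last ks = 0 \<longleftrightarrow> ks = [0]" and "last ks = 1 \<longleftrightarrow> ks = [0, 1] \<or> ks = [1]"
proof -
  have s: "sorted_wrt (<) ks" and ne: "ks \<noteq> []" using assms by (auto simp: valid_grading_def)
  obtain a r where ks: "ks = a # r" using ne by (cases ks) auto
  have a: "a \<ge> 0" using assms ks by simp
  have "last ks = 0 \<longleftrightarrow> ks = [0]" and "last ks = 1 \<longleftrightarrow> ks = [0, 1] \<or> ks = [1]"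
  proof -
    consider "r = []" | b where "r = [b]" | b c t where "r = b # c # t" by (metis list.exhaust)
    then have "(last ks = 0 \<longleftrightarrow> ks = [0]) \<and> (last ks = 1 \<longleftrightarrow> ks = [0, 1] \<or> ks = [1])"
    proof cases
      case 1 then show ?thesis using ks by auto
    next
      case 2 then show ?thesis using ks s a by auto
    next
      case 3
      have lc: "c \<le> last (c # t)" using le_last[of "c # t" 0] s ks 3 by simp
      have "a < b" "b < c" using s ks 3 by auto
      have "last ks = last (c # t)" using ks 3 by simp
      then have "last ks \<ge> 2" using lc a \<open>a < b\<close> \<open>b < c\<close> by linarith
      then show ?thesis using ks 3 by auto
    qed
    then show "last ks = 0 \<longleftrightarrow> ks = [0]" and "last ks = 1 \<longleftrightarrow> ks = [0, 1] \<or> ks = [1]" by auto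
  qed
  then show "last ks = 0 \<longleftrightarrow> ks = [0]" and "last ks = 1 \<longleftrightarrow> ks = [0, 1] \<or> ks = [1]" by auto
qed

theorem lemma3p6:
  fixes ks :: "int list" and ns :: "nat list"
  assumes "valid_grading ks ns"
  shows "(has_depth (dimLam ks ns) 1 \<longleftrightarrow> ks ! 0 = -1 \<and> ns ! 0 = 1)
    \<and> (has_depth (dimLam ks ns) 1 \<longrightarrow> has_depth (dimW ks ns) (last ks + 1))
    \<and> (has_depth (dimLam ks ns) 0 \<longleftrightarrow> ks ! 0 \<ge> 0)
    \<and> (has_depth (dimLam ks ns) 0 \<longrightarrow>
         (has_depth (dimW ks ns) 0 \<longleftrightarrow> ks = [0])
       \<and> (has_depth (dimW ks ns) 1 \<longleftrightarrow> ks = [0, 1] \<or> ks = [1]))"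
proof -
  have l: "length ns = length ks" using assms by (simp add: valid_grading_def)
  note L = lam_depth[OF l] and W = W_depth[OF assms]
  have 1: "has_depth (dimLam ks ns) 1 \<longleftrightarrow> Mn ks ns = -1" using L by auto
  have 0: "has_depth (dimLam ks ns) 0 \<longleftrightarrow> Mn ks ns = 0" using L by auto
  have A: "has_depth (dimLam ks ns) 1 \<longleftrightarrow> ks ! 0 = -1 \<and> ns ! 0 = 1" using 1 Mn_m1[OF assms] by simp
  have B: "has_depth (dimLam ks ns) 1 \<longrightarrow> has_depth (dimW ks ns) (last ks + 1)" using 1 W by simp
  have C: "has_depth (dimLam ks ns) 0 \<longleftrightarrow> ks ! 0 \<ge> 0" using 0 Mn_0[OF assms] by simp
  have D: "has_depth (dimLam ks ns) 0 \<longrightarrow>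
         (has_depth (dimW ks ns) 0 \<longleftrightarrow> ks = [0])
       \<and> (has_depth (dimW ks ns) 1 \<longleftrightarrow> ks = [0, 1] \<or> ks = [1])"
  proof
    assume h: "has_depth (dimLam ks ns) 0"
    then have m: "Mn ks ns = 0" and k: "ks ! 0 \<ge> 0" using 0 C by auto
    show "(has_depth (dimW ks ns) 0 \<longleftrightarrow> ks = [0])
       \<and> (has_depth (dimW ks ns) 1 \<longleftrightarrow> ks = [0, 1] \<or> ks = [1])"
      unfolding W m using last0[OF assms k] by auto
  qed
  show ?thesis using A B C D by blast
qed

end
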